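(* Let $\Sigma$ be a finite nonempty set of $d\times d$ real matrices with nonnegative entries. For each $i\in\{1,\dots,d\}$ let \[ \delta_i=\gcd\{n\ge1:\ \|\Sigma^n\|_{i,i}>0\}, \] with $\delta_i=1$ if this set is empty. Let $\Delta$ be a positive integer that is a multiple of every $\delta_i$. Then \[ \rho(\Sigma)=\lim_{m\to\infty}\max_i\sqrt[m\Delta]{\|\Sigma^{m\Delta}\|_{i,i}}=\lim_{m\to\infty}\max_{A_1,\dots,A_{m\Delta}\in\Sigma}\sqrt[m\Delta]{\operatorname{tr}(A_1\cdots A_{m\Delta})}. \]
   Context: For $n\ge1$, $\|\Sigma^n\|_{i,j}=\max_{A_1,\dots,A_n\in\Sigma}(A_1\cdots A_n)_{i,j}$. The joint spectral radius is $\rho(\Sigma)=\lim_{n\to\infty}\sqrt[n]{\max_{A_1,\dots,A_n\in\Sigma}\|A_1\cdots A_n\|}$ for any matrix norm (the limit exists and is independent of the norm). $\operatorname{tr}$ denotes the trace. *)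

theory Defs
  imports "HOL-Analysis.Analysis"
begin

definition mprod :: "(real^'n^'n) list \<Rightarrow> real^'n^'n" where
  "mprod As = foldr (\<lambda>A B. A ** B) As (mat 1)"

definition prods :: "(real^'n^'n) set \<Rightarrow> nat \<Rightarrow> (real^'n^'n) set" where
  "prods \<Sigma> n = mprod ` {As. set As \<subseteq> \<Sigma> \<and> length As = n}"

text \<open>The entry (i,j) of Sigma^n: max over products of length n.\<close>
definition maxentry :: "(real^'n^'n) set \<Rightarrow> nat \<Rightarrow> 'n \<Rightarrow> 'n \<Rightarrow> real" where
  "maxentry \<Sigma> n i j = Max ((\<lambda>P. P $ i $ j) ` prods \<Sigma> n)"

definition delta :: "(real^'n^'n) set \<Rightarrow> 'n \<Rightarrow> nat" where
  "delta \<Sigma> i = (let S = {n. n \<ge> 1 \<and> maxentry \<Sigma> n i i > 0} in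
                  if S = {} then 1 else Gcd S)"

text \<open>Joint spectral radius, w.r.t. the (Frobenius) norm of real^'n^'n, which is a
  matrix norm; the limit exists and is norm independent.\<close>
definition jsr :: "(real^'n^'n) set \<Rightarrow> real" where
  "jsr \<Sigma> = lim (\<lambda>n. root n (Max (norm ` prods \<Sigma> n)))"

end

theory Submission
  imports Defs
begin



lemma semigroup_multiples:
  fixes T :: "nat set"
  assumes ne: "T \<noteq> {}" and z: "0 \<notin> T" and add: "\<And>a b. a\<in>T \<Longrightarrow> b\<in>T \<Longrightarrow> a+b \<in> T"
  shows "\<exists>N0. \<forall>n\<ge>N0. Gcd T dvd n \<longrightarrow> n \<in> T"
proof -
  define T0 where "T0 = insert 0 T"
  have T0add: "a+b \<in> T0" if "a\<in>T0" "b\<in>T0" for a b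
    using that add unfolding T0_def by auto
  have T0mult: "k*a \<in> T0" if "a \<in> T0" for k a
  proof (induction k)
    case 0 then show ?case by (simp add: T0_def)
  next
    case (Suc k) then show ?case using T0add[OF that Suc] by (simp add: add.commute)
  qed
  define D where "D = {a - b | a b. a \<in> T0 \<and> b \<in> T0 \<and> b < a}"
  obtain t where t: "t \<in> T" using ne by auto
  have "t > 0" using t z by (cases t) auto
  then have "t \<in> D" unfolding D_def T0_def using t by force
  define g where "g = (LEAST x. x \<in> D)"
  have "g \<in> D" unfolding g_def using \<open>t\<in>D\<close> by (rule LeastI)
  then obtain a b where ab: "a \<in> T0" "b \<in> T0" "b < a" "g = a - b" unfolding D_def by auto
  have gmin: "g \<le> x" if "x \<in> D" for x unfolding g_def using that by (rule Least_le)
  have gpos: "g > 0" using ab by simp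
  have dv: "g dvd s" if s: "s \<in> T" for s
  proof (rule ccontr)
    assume nd: "\<not> g dvd s"
    define r where "r = s mod g"
    define j where "j = s div g"
    have r0: "r > 0" using nd unfolding r_def by (simp add: dvd_eq_mod_eq_0)
    have rg: "r < g" unfolding r_def using gpos by simp
    have sdec: "s = j*g + r" unfolding r_def j_def by simp
    have x: "s + j*b \<in> T0" using T0add[of s "j*b"] s T0mult[OF ab(2)] by (auto simp: T0_def)
    have y: "j*a \<in> T0" using T0mult[OF ab(1)] by simp
    have aeq: "a = b + g" using ab by simp
    have "s + j*b = j*a + r" using sdec aeq by (simp add: algebra_simps)
    then have "r \<in> D" unfolding D_def using x y r0
      by (smt (verit, ccfv_threshold) add_diff_cancel_left' less_add_same_cancel1 mem_Collect_eq)
    then show False using gmin rg by fastforce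
  qed
  have g1: "g dvd Gcd T" using dv by (simp add: Gcd_greatest)
  have dT0: "Gcd T dvd x" if "x \<in> T0" for x using that unfolding T0_def by (auto intro: Gcd_dvd)
  have "Gcd T dvd a - b" using dT0[OF ab(1)] dT0[OF ab(2)] by (rule dvd_diff_nat)
  then have gG: "Gcd T = g" using g1 ab(4) by (simp add: dvd_antisym)
  show ?thesis
  proof (intro exI allI impI)
    fix n assume n: "b*b+1 \<le> n" and dn: "Gcd T dvd n"
    have "g dvd n" using dn gG by simp
    then obtain q where q: "n = q*g" by (metis dvd_def mult.commute)
    have "n > 0" using n by simp
    have "n \<in> T0"
    proof (cases "b = 0")
      case True
      then have "a = g" using ab by simp
      then show ?thesis using T0mult[OF ab(1), of q] q by simp
    next
      case False
      then have "b \<in> T" using ab(2) by (auto simp: T0_def)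
      then have "g dvd b" using dv by simp
      then obtain \<beta> where beta: "b = \<beta>*g" by (metis dvd_def mult.commute)
      have b1: "\<beta> \<ge> 1" using False beta by (cases \<beta>) auto
      have "\<beta>*\<beta>*g \<le> b*b" using beta gpos by (simp add: algebra_simps)
      then have "\<beta>*\<beta>*g \<le> q*g" using n q by linarith
      then have qb: "\<beta>*\<beta> \<le> q" using gpos by simp
      have "q div \<beta> \<ge> \<beta>" using qb b1
        by (metis div_le_mono nonzero_mult_div_cancel_right not_one_le_zero)
      moreover have "q mod \<beta> < \<beta>" using b1 by simp
      ultimately have le: "q mod \<beta> \<le> q div \<beta>" by simp
      define x where "x = q div \<beta> - q mod \<beta>"
      have aeq: "a = \<beta>*g + g" using beta ab by simp
      have "x*b + (q mod \<beta>)*a = ((x + q mod \<beta>)*\<beta> + q mod \<beta>)*g"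
        unfolding aeq beta by (simp add: algebra_simps)
      also have "x + q mod \<beta> = q div \<beta>" unfolding x_def using le by simp
      also have "(q div \<beta> * \<beta> + q mod \<beta>) = q" by simp
      finally have "n = x*b + (q mod \<beta>)*a" using q by simp
      then show ?thesis using T0add T0mult ab by simp
    qed
    then show "n \<in> T" using \<open>n>0\<close> by (auto simp: T0_def)
  qed
qed




lemma mprod_Nil[simp]: "mprod [] = mat 1" by (simp add: mprod_def)
lemma mprod_Cons[simp]: "mprod (A#As) = A ** mprod As" by (simp add: mprod_def)
lemma mprod_append: "mprod (xs @ ys) = mprod xs ** mprod ys"
  by (induction xs) (simp_all add: matrix_mul_assoc)

lemma mm_entry: "((A::real^'n^'n) ** B) $ i $ j = (\<Sum>k\<in>UNIV. A$i$k * B$k$j)"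
  by (simp add: matrix_matrix_mult_def)

lemma mat1_entry: "(mat 1 :: real^'n^'n) $ i $ j = (if i = j then 1 else 0)"
  by (simp add: mat_def)

lemma prods_0: "prods S 0 = {mat 1}"
  by (auto simp: prods_def)

locale nnset =
  fixes S :: "(real^'n^'n) set"
  assumes fin: "finite S" and ne: "S \<noteq> {}" and nn: "\<forall>A\<in>S. \<forall>i j. A$i$j \<ge> 0"
begin

definition cS where "cS = Max (norm ` S)"
definition bS where "bS = real CARD('n) * cS + 1"

lemma entry_le_cS: "A \<in> S \<Longrightarrow> A$i$j \<le> cS"
proof -
  assume A: "A \<in> S"
  have "A$i$j \<le> norm (A$i)" using component_le_norm_cart[of "A$i" j] by simp
  also have "\<dots> \<le> norm A" by (rule Finite_Cartesian_Product.norm_nth_le)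
  also have "\<dots> \<le> cS" unfolding cS_def using fin A by simp
  finally show ?thesis .
qed

lemma cS_nonneg: "0 \<le> cS"
proof -
  obtain A where "A \<in> S" using ne by auto
  then show ?thesis unfolding cS_def using fin by (meson Max_ge finite_imageI image_eqI norm_ge_zero order_trans)
qed

lemma bS_ge1: "1 \<le> bS" unfolding bS_def using cS_nonneg by simp

lemma mprod_nonneg: "set As \<subseteq> S \<Longrightarrow> 0 \<le> mprod As $ i $ j"
proof (induction As arbitrary: i j)
  case Nil then show ?case by (simp add: mat1_entry)
next
  case (Cons A As)
  then show ?case using nn by (auto simp: mm_entry intro!: sum_nonneg)
qed

lemma mprod_le: "set As \<subseteq> S \<Longrightarrow> mprod As $ i $ j \<le> bS ^ length As"
proof (induction As arbitrary: i j)
  case Nil then show ?case by (simp add: mat1_entry)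
next
  case (Cons A As)
  have "mprod (A#As) $ i $ j = (\<Sum>k\<in>UNIV. A$i$k * mprod As $k$j)" by (simp add: mm_entry)
  also have "\<dots> \<le> (\<Sum>k\<in>(UNIV::'n set). cS * bS ^ length As)"
  proof (rule sum_mono)
    fix k
    show "A$i$k * mprod As $k$j \<le> cS * bS ^ length As"
      using Cons entry_le_cS[of A i k] nn mprod_nonneg[of As k j] cS_nonneg
      by (intro mult_mono) auto
  qed
  also have "\<dots> = real CARD('n) * cS * bS ^ length As" by simp
  also have "\<dots> \<le> bS * bS ^ length As"
    using bS_ge1 by (intro mult_right_mono) (auto simp: bS_def)
  finally show ?case by simp
qed

lemma lists_fin: "finite {As. set As \<subseteq> S \<and> length As = n}"
  using fin by (rule finite_lists_length_eq)

lemma prods_fin: "finite (prods S n)" unfolding prods_def using lists_fin by simp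

lemma prods_ne: "prods S n \<noteq> {}"
proof -
  obtain A where "A \<in> S" using ne by auto
  then have "replicate n A \<in> {As. set As \<subseteq> S \<and> length As = n}" by auto
  then show ?thesis unfolding prods_def by blast
qed

lemma prods_nonneg: "P \<in> prods S n \<Longrightarrow> 0 \<le> P $ i $ j"
  unfolding prods_def using mprod_nonneg by auto

lemma prods_le: "P \<in> prods S n \<Longrightarrow> P $ i $ j \<le> bS ^ n"
  unfolding prods_def using mprod_le by auto

lemma prods_mult: "P \<in> prods S n \<Longrightarrow> Q \<in> prods S m \<Longrightarrow> P ** Q \<in> prods S (n+m)"
proof -
  assume "P \<in> prods S n" "Q \<in> prods S m"
  then obtain xs ys where "set xs \<subseteq> S" "length xs = n" "P = mprod xs"
     "set ys \<subseteq> S" "length ys = m" "Q = mprod ys" unfolding prods_def by auto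
  then show ?thesis unfolding prods_def
    by (auto simp: mprod_append[symmetric] intro!: image_eqI[where x="xs@ys"])
qed

lemma prods_split: "R \<in> prods S (n+m) \<Longrightarrow> \<exists>P\<in>prods S n. \<exists>Q\<in>prods S m. R = P ** Q"
proof -
  assume "R \<in> prods S (n+m)"
  then obtain As where As: "set As \<subseteq> S" "length As = n+m" "R = mprod As" unfolding prods_def by auto
  have "R = mprod (take n As) ** mprod (drop n As)"
    using As mprod_append[of "take n As" "drop n As"] by simp
  moreover have "mprod (take n As) \<in> prods S n" "mprod (drop n As) \<in> prods S m"
    unfolding prods_def using As set_take_subset[of n As] set_drop_subset[of n As]
    by (auto intro!: imageI)
  ultimately show ?thesis by blast
qed

abbreviation "M n i j \<equiv> maxentry S n i j"

lemma M_ge: "P \<in> prods S n \<Longrightarrow> P $ i $ j \<le> M n i j"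
  unfolding maxentry_def using prods_fin by (intro Max_ge) auto

lemma M_in: "\<exists>P\<in>prods S n. P $ i $ j = M n i j"
proof -
  have "M n i j \<in> (\<lambda>P. P$i$j) ` prods S n"
    unfolding maxentry_def using prods_fin prods_ne by (intro Max_in) auto
  then show ?thesis by auto
qed

lemma M_nonneg: "0 \<le> M n i j"
proof -
  obtain P where "P \<in> prods S n" "P $ i $ j = M n i j" using M_in by blast
  then show ?thesis using prods_nonneg by metis
qed

lemma M_le: "M n i j \<le> bS ^ n"
proof -
  obtain P where "P \<in> prods S n" "P $ i $ j = M n i j" using M_in by blast
  then show ?thesis using prods_le by metis
qed

lemma M_0: "M 0 i i = 1"
  unfolding maxentry_def by (simp add: prods_0 mat1_entry)

lemma M_super: "M n i k * M m k j \<le> M (n+m) i j"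
proof -
  obtain P where P: "P \<in> prods S n" "P$i$k = M n i k" using M_in by blast
  obtain Q where Q: "Q \<in> prods S m" "Q$k$j = M m k j" using M_in by blast
  have "P$i$k * Q$k$j \<le> (\<Sum>k'\<in>UNIV. P$i$k' * Q$k'$j)"
    using P Q prods_nonneg by (intro member_le_sum) auto
  also have "\<dots> = (P ** Q)$i$j" by (simp add: mm_entry)
  also have "\<dots> \<le> M (n+m) i j" using prods_mult[OF P(1) Q(1)] by (rule M_ge)
  finally show ?thesis using P Q by simp
qed


definition Lam where "Lam = Sup {root l (M l i i) | l i. l \<ge> 1}"

lemma Lam_set_ne: "{root l (M l i i) | l i. l \<ge> 1} \<noteq> {}" by blast

lemma Lam_set_bdd: "bdd_above {root l (M l i i) | l i. l \<ge> 1}"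
proof (rule bdd_aboveI[where M=bS])
  fix x assume "x \<in> {root l (M l i i) | l i. l \<ge> 1}"
  then obtain l i where x: "x = root l (M l i i)" "l \<ge> 1" by auto
  have "root l (M l i i) \<le> root l (bS ^ l)" using x M_le by (intro real_root_le_mono) auto
  also have "\<dots> = bS" using x bS_ge1 by (intro real_root_power_cancel) auto
  finally show "x \<le> bS" using x by simp
qed

lemma Lam_upper: "l \<ge> 1 \<Longrightarrow> root l (M l i i) \<le> Lam"
  unfolding Lam_def using Lam_set_bdd by (intro cSup_upper) auto

lemma Lam_nonneg: "0 \<le> Lam"
  using Lam_upper[of 1] M_nonneg[of 1] by (meson order_trans real_root_ge_zero order_refl)

lemma M_le_Lam: "M l i i \<le> Lam ^ l"
proof (cases "l = 0")
  case True then show ?thesis by (simp add: M_0)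
next
  case False
  then have "root l (M l i i) ^ l \<le> Lam ^ l"
    using Lam_upper[of l i] M_nonneg by (intro power_mono) (auto simp: real_root_ge_zero)
  then show ?thesis using False M_nonneg by simp
qed

lemma Lam_approx: "\<epsilon> > 0 \<Longrightarrow> \<exists>l i. l \<ge> 1 \<and> Lam - \<epsilon> < root l (M l i i)"
proof -
  assume "\<epsilon> > 0"
  then have "Lam - \<epsilon> < Sup {root l (M l i i) | l i. l \<ge> 1}" unfolding Lam_def by simp
  then show ?thesis using less_cSup_iff[OF Lam_set_ne Lam_set_bdd] by blast
qed

lemma M_pow: "M l i i ^ k \<le> M (k*l) i i"
proof (induction k)
  case 0 then show ?case by (simp add: M_0)
next
  case (Suc k)
  have "M l i i ^ Suc k = M (k*l) i i * M l i i \<or> True" by simp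
  have "M l i i ^ Suc k \<le> M (k*l) i i * M l i i"
    using mult_left_mono[OF Suc.IH M_nonneg[of l i i]] by (simp add: mult.commute)
  also have "\<dots> \<le> M (k*l + l) i i" by (rule M_super)
  finally show ?case by (simp add: add.commute)
qed

lemma diag_lower:
  assumes l1: "l \<ge> 1" and vpos: "0 < M l i i"
  shows "\<exists>c1>0. \<exists>N0. \<forall>N\<ge>N0. delta S i dvd N \<longrightarrow> c1 * root l (M l i i) ^ N \<le> M N i i"
proof -
  define v where "v = M l i i"
  define \<rho> where "\<rho> = root l v"
  have rpos: "\<rho> > 0" unfolding \<rho>_def using vpos v_def l1 by simp
  have rv: "\<rho> ^ l = v" unfolding \<rho>_def using l1 vpos v_def by simp
  define T where "T = {n. n \<ge> 1 \<and> M n i i > 0}"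
  have lT: "l \<in> T" unfolding T_def using l1 vpos by simp
  have Tadd: "a + b \<in> T" if "a \<in> T" "b \<in> T" for a b
  proof -
    have "0 < M a i i * M b i i" using that unfolding T_def by simp
    also have "\<dots> \<le> M (a+b) i i" by (rule M_super)
    finally show ?thesis using that unfolding T_def by simp
  qed
  have dT: "delta S i = Gcd T" unfolding delta_def T_def Let_def using lT T_def by auto
  obtain N0 where N0: "\<forall>n\<ge>N0. Gcd T dvd n \<longrightarrow> n \<in> T"
  proof -
    have "T \<noteq> {}" using lT by blast
    moreover have "0 \<notin> T" unfolding T_def by simp
    ultimately show ?thesis using semigroup_multiples[of T] Tadd that by blast
  qed
  define R where "R = {r. N0 \<le> r \<and> r < N0 + l \<and> r \<in> T}"
  have Rfin: "finite R" unfolding R_def by simp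
  define c0 where "c0 = Min (insert 1 ((\<lambda>r. M r i i) ` R))"
  have c0pos: "c0 > 0" unfolding c0_def using Rfin by (subst Min_gr_iff) (auto simp: R_def T_def)
  have c0le: "c0 \<le> M r i i" if "r \<in> R" for r unfolding c0_def using Rfin that by (intro Min_le) auto
  define E where "E = max 1 (\<rho> ^ (N0 + l))"
  have Epos: "E > 0" unfolding E_def by simp
  show ?thesis
  proof (intro exI[of _ "c0 / E"] conjI exI[of _ N0] allI impI)
    show "c0 / E > 0" using c0pos Epos by simp
    fix N assume N: "N0 \<le> N" and dN: "delta S i dvd N"
    define k where "k = (N - N0) div l"
    define r where "r = N - k*l"
    have kl: "k*l \<le> N - N0" unfolding k_def by (metis div_times_less_eq_dividend)
    have r1: "N0 \<le> r" unfolding r_def using kl N by simp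
    have "N - N0 < k*l + l" unfolding k_def using l1
      by (metis add.commute div_mult_mod_eq mod_less_divisor nat_add_left_cancel_less le_trans zero_less_one less_le_trans)
    then have r2: "r < N0 + l" unfolding r_def using N kl by simp
    have "Gcd T dvd l" using lT by (rule Gcd_dvd)
    then have "Gcd T dvd k*l" by simp
    moreover have "Gcd T dvd N" using dN dT by simp
    ultimately have "Gcd T dvd r" unfolding r_def by (rule dvd_diff_nat[rotated])
    then have "r \<in> T" using N0 r1 by blast
    then have rR: "r \<in> R" unfolding R_def using r1 r2 by simp
    have Nrk: "N = r + k*l" unfolding r_def using kl N by simp
    have pr: "\<rho> ^ r \<le> E"
    proof (cases "\<rho> \<le> 1")
      case True then show ?thesis unfolding E_def using rpos by (simp add: power_le_one)
    next
      case False then have "\<rho> ^ r \<le> \<rho> ^ (N0 + l)" using r2 by (intro power_increasing) auto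
      then show ?thesis unfolding E_def by simp
    qed
    have "c0 / E * \<rho> ^ N = c0 * \<rho> ^ (k*l) * (\<rho> ^ r / E)"
      unfolding Nrk by (simp add: power_add field_simps)
    also have "\<dots> \<le> c0 * \<rho> ^ (k*l) * 1"
      using pr Epos c0pos rpos by (intro mult_left_mono) auto
    also have "\<rho> ^ (k*l) = v ^ k" using rv by (metis power_mult mult.commute)
    also have "c0 * v ^ k * 1 \<le> M r i i * M (k*l) i i"
      using c0le[OF rR] c0pos M_pow[of l i k] v_def vpos by (auto intro!: mult_mono)
    also have "\<dots> \<le> M N i i" unfolding Nrk by (rule M_super)
    finally show "c0 / E * root l (M l i i) ^ N \<le> M N i i" unfolding \<rho>_def v_def .
  qed
qed

end



primrec walk :: "(real^'n^'n) list \<Rightarrow> 'n set \<Rightarrow> 'n \<Rightarrow> 'n \<Rightarrow> real" where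
  "walk [] F s j = (if s = j \<and> s \<notin> F then 1 else 0)"
| "walk (A#As) F s j = (if s \<in> F then 0 else (\<Sum>k\<in>UNIV. A$s$k * walk As F k j))"

lemma walk_empty: "walk As {} s j = mprod As $ s $ j"
  by (induction As arbitrary: s) (auto simp: mm_entry mat1_entry)

lemma walk_in_F: "s \<in> F \<Longrightarrow> walk As F s j = 0"
  by (cases As) auto

lemma walk_nonneg: "\<forall>A\<in>set As. \<forall>i j. 0 \<le> A$i$j \<Longrightarrow> 0 \<le> walk As F s j"
  by (induction As arbitrary: s) (auto intro!: sum_nonneg)

lemma walk_le: "\<forall>A\<in>set As. \<forall>i j. 0 \<le> A$i$j \<Longrightarrow> walk As F s j \<le> walk As {} s j"
proof (induction As arbitrary: s)
  case Nil then show ?case by auto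
next
  case (Cons A As)
  show ?case
  proof (cases "s \<in> F")
    case True then show ?thesis using walk_nonneg[of "A#As" "{}" s j] Cons.prems by simp
  next
    case False then show ?thesis using Cons
      by (auto intro!: sum_mono mult_left_mono)
  qed
qed

definition u where
  "u As F i j t = (if t = length As then (if i = j then 1 else 0)
     else (\<Sum>k\<in>UNIV. As!t$i$k * walk (drop (Suc t) As) (insert i F) k j))"

lemma u_Cons0: "u (A#As) F i j 0 = (\<Sum>k\<in>UNIV. A$i$k * walk As (insert i F) k j)"
  by (simp add: u_def)

lemma u_ConsSuc: "u (A#As) F i j (Suc t) = u As F i j t"
  by (simp add: u_def)

lemma walk_decomp:
  "walk As F s j = walk As (insert i F) s j + (\<Sum>t\<le>length As. walk (take t As) F s i * u As F i j t)"
proof (induction As arbitrary: s)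
  case Nil then show ?case by (auto simp: u_def)
next
  case (Cons A As)
  show ?case
  proof (cases "s \<in> F")
    case True then show ?thesis
      by (simp add: sum.atMost_Suc_shift walk_in_F del: sum.atMost_Suc)
  next
    case sF: False
    let ?n = "length As"
    have sw: "(\<Sum>k\<in>UNIV. A$s$k * (\<Sum>t\<le>?n. walk (take t As) F k i * u As F i j t))
        = (\<Sum>t\<le>?n. (\<Sum>k\<in>UNIV. A$s$k * walk (take t As) F k i) * u As F i j t)"
    proof -
      have "(\<Sum>k\<in>UNIV. A$s$k * (\<Sum>t\<le>?n. walk (take t As) F k i * u As F i j t))
          = (\<Sum>k\<in>UNIV. \<Sum>t\<le>?n. A$s$k * walk (take t As) F k i * u As F i j t)"
        by (simp add: sum_distrib_left mult.assoc)
      also have "\<dots> = (\<Sum>t\<le>?n. \<Sum>k\<in>UNIV. A$s$k * walk (take t As) F k i * u As F i j t)"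
        by (rule sum.swap)
      also have "\<dots> = (\<Sum>t\<le>?n. (\<Sum>k\<in>UNIV. A$s$k * walk (take t As) F k i) * u As F i j t)"
        by (simp add: sum_distrib_right)
      finally show ?thesis .
    qed
    have "walk (A#As) F s j = (\<Sum>k\<in>UNIV. A$s$k * walk As (insert i F) k j)
        + (\<Sum>k\<in>UNIV. A$s$k * (\<Sum>t\<le>?n. walk (take t As) F k i * u As F i j t))"
      using sF by (simp add: Cons.IH[of] distrib_left sum.distrib)
    also have "\<dots> = (\<Sum>k\<in>UNIV. A$s$k * walk As (insert i F) k j)
        + (\<Sum>t\<le>?n. walk (take (Suc t) (A#As)) F s i * u (A#As) F i j (Suc t))"
      using sF sw by (simp add: u_ConsSuc)
    also have "\<dots> = walk (A#As) (insert i F) s j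
        + (\<Sum>t\<le>length (A#As). walk (take t (A#As)) F s i * u (A#As) F i j t)"
      using sF by (simp add: sum.atMost_Suc_shift u_Cons0 del: sum.atMost_Suc)
    finally show ?thesis .
  qed
qed

context nnset
begin

lemma walk_bound:
  assumes mu: "\<mu> > 0" and hyp: "\<And>As s. set As \<subseteq> S \<Longrightarrow> mprod As $ s $ s \<le> \<mu> ^ length As"
  shows "card (- F) \<le> r \<Longrightarrow> set As \<subseteq> S \<Longrightarrow>
     walk As F s j \<le> (1 + real CARD('n) * (cS/\<mu>)) ^ r * (real (length As) + 1) ^ r * \<mu> ^ length As"
proof (induction r arbitrary: F As s j)
  case 0
  then have "- F = {}" by (simp add: card_eq_0_iff)
  then have "s \<in> F" by auto
  then show ?case using mu cS_nonneg by (simp add: walk_in_F)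
next
  case (Suc r)
  define d where "d = real CARD('n)"
  define c' where "c' = cS / \<mu>"
  have c'0: "c' \<ge> 0" unfolding c'_def using cS_nonneg mu by simp
  define B where "B = (1 + d * c') ^ r"
  have B1: "B \<ge> 1" unfolding B_def using c'0 d_def by simp
  define n where "n = length As"
  have nnA: "\<forall>A\<in>set As. \<forall>i j. 0 \<le> A$i$j" using Suc.prems nn by auto
  show ?case
  proof (cases "s \<in> F")
    case True then show ?thesis using mu cS_nonneg by (simp add: walk_in_F)
  next
    case sF: False
    have cardI: "card (- insert s F) \<le> r"
    proof -
      have "- insert s F = (- F) - {s}" by auto
      then have "card (- insert s F) = card (- F) - 1" using sF by simp
      then show ?thesis using Suc.prems by simp
    qed
    define X where "X = (1 + d * c' * B) * (real n + 1) ^ r * \<mu> ^ n"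
    have tmb: "walk (take t As) F s s * u As F s j t \<le> X" if t: "t \<le> n" for t
    proof -
      have setT: "set (take t As) \<subseteq> S" using Suc.prems(2) by (meson order_trans set_take_subset)
      have w1: "walk (take t As) F s s \<le> \<mu> ^ t"
      proof -
        have nnT: "\<forall>A\<in>set (take t As). \<forall>i j. 0 \<le> A$i$j" using nnA by (meson in_set_takeD)
        have "walk (take t As) F s s \<le> walk (take t As) {} s s"
          using nnT by (rule walk_le)
        also have "\<dots> = mprod (take t As) $ s $ s" by (rule walk_empty)
        also have "\<dots> \<le> \<mu> ^ length (take t As)" using hyp[OF setT] .
        finally show ?thesis using t n_def by simp
      qed
      have u0: "0 \<le> u As F s j t"
      proof (cases "t = n")
        case True then show ?thesis by (simp add: u_def n_def)
      next
        case False
        then have tl: "t < length As" using t n_def by simp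
        then have At: "As!t \<in> set As" by simp
        have nnD: "\<forall>A\<in>set (drop (Suc t) As). \<forall>i j. 0 \<le> A$i$j" using nnA by (meson in_set_dropD)
        have "0 \<le> (\<Sum>k\<in>UNIV. As!t$s$k * walk (drop (Suc t) As) (insert s F) k j)"
        proof (rule sum_nonneg)
          fix k
          show "0 \<le> As!t$s$k * walk (drop (Suc t) As) (insert s F) k j"
            using nnA At walk_nonneg[OF nnD] by (intro mult_nonneg_nonneg) auto
        qed
        then show ?thesis using tl by (simp add: u_def)
      qed
      have "walk (take t As) F s s * u As F s j t \<le> \<mu> ^ t * u As F s j t"
        using w1 u0 by (rule mult_right_mono)
      also have "\<dots> \<le> X"
      proof (cases "t = n")
        case True
        have "u As F s j t \<le> 1" using True by (simp add: u_def n_def)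
        then have "\<mu> ^ t * u As F s j t \<le> \<mu> ^ n * 1"
          using mult_left_mono[of "u As F s j t" 1 "\<mu>^n"] True mu by simp
        also have "\<dots> \<le> \<mu> ^ n * ((1 + d * c' * B) * (real n + 1) ^ r)"
        proof -
          have a1: "1 \<le> 1 + d * c' * B" using B1 c'0 d_def by simp
          have a2: "1 \<le> (real n + 1) ^ r" by simp
          have "1 * 1 \<le> (1 + d * c' * B) * (real n + 1) ^ r"
            using a1 a2 by (intro mult_mono) auto
          then show ?thesis using mu by (intro mult_left_mono) auto
        qed
        finally show ?thesis unfolding X_def by (simp add: mult_ac)
      next
        case False
        then have tn: "t < n" using t by simp
        define p where "p = n - Suc t"
        have np: "n = t + 1 + p" unfolding p_def using tn by simp
        have lend: "length (drop (Suc t) As) = p" unfolding p_def n_def by simp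
        have setD: "set (drop (Suc t) As) \<subseteq> S" using Suc.prems(2) by (meson order_trans set_drop_subset)
        have nnD: "\<forall>A\<in>set (drop (Suc t) As). \<forall>i j. 0 \<le> A$i$j" using nnA by (meson in_set_dropD)
        have As_t: "As ! t \<in> S" using Suc.prems(2) tn n_def nth_mem[of t As] by blast
        have "u As F s j t = (\<Sum>k\<in>UNIV. As!t$s$k * walk (drop (Suc t) As) (insert s F) k j)"
          using tn by (simp add: u_def n_def)
        also have "\<dots> \<le> (\<Sum>k\<in>(UNIV::'n set). cS * (B * (real p + 1) ^ r * \<mu> ^ p))"
        proof (rule sum_mono)
          fix k
          have "walk (drop (Suc t) As) (insert s F) k j \<le> B * (real p + 1) ^ r * \<mu> ^ p"
            using Suc.IH[OF cardI setD] lend unfolding B_def d_def c'_def by simp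
          then show "As!t$s$k * walk (drop (Suc t) As) (insert s F) k j \<le> cS * (B * (real p + 1) ^ r * \<mu> ^ p)"
            using entry_le_cS[OF As_t] nn As_t walk_nonneg[OF nnD] cS_nonneg
            by (intro mult_mono) auto
        qed
        also have "\<dots> = d * cS * B * (real p + 1) ^ r * \<mu> ^ p" by (simp add: d_def)
        finally have ub: "u As F s j t \<le> d * cS * B * (real p + 1) ^ r * \<mu> ^ p" .
        have "\<mu> ^ t * u As F s j t \<le> \<mu> ^ t * (d * cS * B * (real p + 1) ^ r * \<mu> ^ p)"
          using ub mu by (intro mult_left_mono) auto
        also have "\<dots> = d * c' * B * (real p + 1) ^ r * \<mu> ^ n"
          unfolding np c'_def using mu by (simp add: power_add field_simps)
        also have "\<dots> \<le> d * c' * B * (real n + 1) ^ r * \<mu> ^ n"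
        proof -
          have "(real p + 1) ^ r \<le> (real n + 1) ^ r" using np by (intro power_mono) auto
          moreover have "0 \<le> d * c' * B" using B1 c'0 d_def by simp
          ultimately have "d * c' * B * (real p + 1) ^ r \<le> d * c' * B * (real n + 1) ^ r"
            by (rule mult_left_mono)
          then show ?thesis using mu by (intro mult_right_mono) auto
        qed
        also have "\<dots> \<le> X" unfolding X_def using mu
          by (intro mult_right_mono) (auto simp: distrib_right)
        finally show ?thesis .
      qed
      finally show ?thesis .
    qed
    have "walk As F s j = walk As (insert s F) s j + (\<Sum>t\<le>n. walk (take t As) F s s * u As F s j t)"
      unfolding n_def by (rule walk_decomp)
    also have "walk As (insert s F) s j = 0" by (simp add: walk_in_F)
    also have "(\<Sum>t\<le>n. walk (take t As) F s s * u As F s j t) \<le> (\<Sum>t\<le>n. X)"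
      using tmb by (intro sum_mono) auto
    also have "\<dots> = (real n + 1) * X" by simp
    also have "\<dots> = (1 + d * c' * B) * (real n + 1) ^ Suc r * \<mu> ^ n" unfolding X_def by simp
    also have "\<dots> \<le> (1 + d * c') ^ Suc r * (real n + 1) ^ Suc r * \<mu> ^ n"
    proof -
      have "1 + d * c' * B \<le> B + d * c' * B" using B1 by simp
      also have "\<dots> = (1 + d * c') ^ Suc r" unfolding B_def by (simp add: algebra_simps)
      finally show ?thesis using mu by (intro mult_right_mono) auto
    qed
    finally show ?thesis unfolding n_def d_def c'_def by simp
  qed
qed

end



lemma frob_vec: fixes x :: "real^'n" shows "(norm x)^2 = (\<Sum>j\<in>UNIV. (x$j)^2)"
  by (simp add: norm_vec_def L2_set_def sum_nonneg)

lemma frob_mat: fixes A :: "real^'n^'m" shows "(norm A)^2 = (\<Sum>i\<in>UNIV. \<Sum>j\<in>UNIV. (A$i$j)^2)"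
proof -
  have "(norm A)^2 = (\<Sum>i\<in>UNIV. (norm (A$i))^2)"
    by (simp add: norm_vec_def L2_set_def sum_nonneg)
  then show ?thesis by (simp add: frob_vec)
qed

lemma frob_mult: fixes A B :: "real^'n^'n" shows "norm (A ** B) \<le> norm A * norm B"
proof (rule power2_le_imp_le)
  have "(norm (A ** B))^2 = (\<Sum>i\<in>UNIV. \<Sum>j\<in>UNIV. (\<Sum>k\<in>UNIV. A$i$k * B$k$j)^2)"
    by (simp add: frob_mat mm_entry)
  also have "\<dots> \<le> (\<Sum>i\<in>UNIV. \<Sum>j\<in>UNIV. (\<Sum>k\<in>UNIV. (A$i$k)^2) * (\<Sum>k\<in>UNIV. (B$k$j)^2))"
    by (intro sum_mono Cauchy_Schwarz_ineq_sum)
  also have "\<dots> = (\<Sum>i\<in>UNIV. \<Sum>k\<in>UNIV. (A$i$k)^2) * (\<Sum>j\<in>UNIV. \<Sum>k\<in>UNIV. (B$k$j)^2)"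
    by (simp add: sum_product)
  also have "(\<Sum>j\<in>UNIV. \<Sum>k\<in>UNIV. (B$k$j)^2) = (\<Sum>k\<in>UNIV. \<Sum>j\<in>UNIV. (B$k$j)^2)"
    by (rule sum.swap)
  also have "(\<Sum>i\<in>UNIV. \<Sum>k\<in>UNIV. (A$i$k)^2) * (\<Sum>k\<in>UNIV. \<Sum>j\<in>UNIV. (B$k$j)^2) = (norm A * norm B)^2"
    by (simp add: frob_mat power_mult_distrib)
  finally show "(norm (A ** B))^2 \<le> (norm A * norm B)^2" .
  show "0 \<le> norm A * norm B" by simp
qed

lemma entry_le_norm: fixes A :: "real^'n^'m" shows "\<bar>A$i$j\<bar> \<le> norm A"
proof -
  have "\<bar>A$i$j\<bar> \<le> norm (A$i)" by (rule component_le_norm_cart)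
  also have "\<dots> \<le> norm A" by (rule Finite_Cartesian_Product.norm_nth_le)
  finally show ?thesis .
qed

lemma norm_le_entries: fixes A :: "real^'n^'m" shows "norm A \<le> (\<Sum>i\<in>UNIV. \<Sum>j\<in>UNIV. \<bar>A$i$j\<bar>)"
proof -
  have "norm A \<le> (\<Sum>i\<in>UNIV. \<bar>norm (A$i)\<bar>)" unfolding norm_vec_def[of A]
    using L2_set_le_sum[of UNIV "\<lambda>i. norm (A$i)"] by simp
  also have "\<dots> \<le> (\<Sum>i\<in>UNIV. \<Sum>j\<in>UNIV. \<bar>A$i$j\<bar>)"
    using norm_le_l1_cart by (intro sum_mono) simp
  finally show ?thesis .
qed

context nnset
begin

definition a where "a n = Max (norm ` prods S n)"

lemma a_ge: "P \<in> prods S n \<Longrightarrow> norm P \<le> a n"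
  unfolding a_def using prods_fin by (intro Max_ge) auto

lemma a_in: "\<exists>P\<in>prods S n. a n = norm P"
proof -
  have "a n \<in> norm ` prods S n" unfolding a_def using prods_fin prods_ne by (intro Max_in) auto
  then show ?thesis by auto
qed

lemma a_nonneg: "0 \<le> a n" using a_in[of n] by auto

lemma M_le_a: "M n i i \<le> a n"
proof -
  obtain P where P: "P \<in> prods S n" "P$i$i = M n i i" using M_in by blast
  have "P$i$i \<le> \<bar>P$i$i\<bar>" by simp
  also have "\<dots> \<le> norm P" by (rule entry_le_norm)
  also have "\<dots> \<le> a n" using P by (intro a_ge)
  finally show ?thesis using P by simp
qed

lemma a_sub: "a (n+m) \<le> a n * a m"
proof -
  obtain R where R: "R \<in> prods S (n+m)" "a (n+m) = norm R" using a_in by blast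
  obtain P Q where PQ: "P \<in> prods S n" "Q \<in> prods S m" "R = P ** Q" using prods_split[OF R(1)] by blast
  have "norm R \<le> norm P * norm Q" using PQ frob_mult by simp
  also have "\<dots> \<le> a n * a m" using PQ a_ge a_nonneg by (intro mult_mono) auto
  finally show ?thesis using R by simp
qed

lemma a_pow: "k \<ge> 1 \<Longrightarrow> a (k*n) \<le> a n ^ k"
proof (induction k rule: dec_induct)
  case base then show ?case by simp
next
  case (step k)
  have "a (Suc k * n) = a (k*n + n)" by (simp add: add.commute)
  also have "\<dots> \<le> a (k*n) * a n" by (rule a_sub)
  also have "\<dots> \<le> a n ^ k * a n" using step a_nonneg by (intro mult_right_mono) auto
  finally show ?case by (simp add: mult.commute)
qed

end



context nnset
begin

definition f where "f D m = Max ((\<lambda>i. root (m*D) (M (m*D) i i)) ` UNIV)"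

lemma f_ge: "root (m*D) (M (m*D) i i) \<le> f D m"
  unfolding f_def by (intro Max_ge) auto

lemma f_in: "\<exists>i. f D m = root (m*D) (M (m*D) i i)"
proof -
  have "f D m \<in> (\<lambda>i. root (m*D) (M (m*D) i i)) ` UNIV" unfolding f_def by (intro Max_in) auto
  then show ?thesis by auto
qed

lemma f_nonneg: "0 \<le> f D m"
  using f_in[of D m] M_nonneg real_root_ge_zero by metis

lemma f_le: "m*D \<ge> 1 \<Longrightarrow> f D m \<le> Lam"
  using f_in[of D m] Lam_upper by metis

lemma f_lim:
  assumes D: "D > 0" and dv: "\<forall>i. delta S i dvd D"
  shows "f D \<longlonglongrightarrow> Lam"
proof (rule order_tendstoI)
  fix b assume b: "Lam < b"
  have "\<forall>\<^sub>F m in sequentially. m \<ge> 1" by (rule eventually_ge_at_top)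
  then show "\<forall>\<^sub>F m in sequentially. f D m < b"
  proof (rule eventually_mono)
    fix m :: nat assume "m \<ge> 1"
    then have "m*D \<ge> 1" using D by (simp add: Suc_le_eq)
    then show "f D m < b" using f_le b by fastforce
  qed
next
  fix b assume b: "b < Lam"
  obtain l i where l: "l \<ge> 1" "b < root l (M l i i)" using Lam_approx[of "Lam - b"] b by auto
  show "\<forall>\<^sub>F m in sequentially. b < f D m"
  proof (cases "b < 0")
    case True then show ?thesis using f_nonneg[of D] by (intro always_eventually) (auto intro: less_le_trans)
  next
    case False
    define \<rho> where "\<rho> = root l (M l i i)"
    have Mpos: "0 < M l i i"
    proof (rule ccontr)
      assume "\<not> 0 < M l i i"
      then have "M l i i = 0" using M_nonneg[of l i i] by simp
      then show False using l False by simp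
    qed
    have rho0: "0 \<le> \<rho>" unfolding \<rho>_def using M_nonneg by (simp add: real_root_ge_zero)
    obtain c1 N0 where c1: "c1 > 0" and N0: "\<forall>N\<ge>N0. delta S i dvd N \<longrightarrow> c1 * \<rho> ^ N \<le> M N i i"
      using diag_lower[OF l(1) Mpos] unfolding \<rho>_def by blast
    have sm: "strict_mono (\<lambda>m. m*D)" using D by (intro strict_monoI) simp
    have "(\<lambda>N. root N c1) \<longlonglongrightarrow> 1" by (rule LIMSEQ_root_const[OF c1])
    then have "((\<lambda>N. root N c1) \<circ> (\<lambda>m. m*D)) \<longlonglongrightarrow> 1" using sm by (rule LIMSEQ_subseq_LIMSEQ)
    then have "(\<lambda>m. root (m*D) c1 * \<rho>) \<longlonglongrightarrow> 1 * \<rho>"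
      by (intro tendsto_mult tendsto_const) (simp add: comp_def)
    then have ev1: "\<forall>\<^sub>F m in sequentially. b < root (m*D) c1 * \<rho>"
      using l(2) unfolding \<rho>_def by (intro order_tendstoD(1)) auto
    have ev2: "\<forall>\<^sub>F m in sequentially. m \<ge> max 1 N0" by (rule eventually_ge_at_top)
    show ?thesis using ev1 ev2
    proof (rule eventually_elim2)
      fix m assume h1: "b < root (m*D) c1 * \<rho>" and h2: "max 1 N0 \<le> m"
      define N where "N = m*D"
      have N1: "N > 0" unfolding N_def using h2 D by simp
      have "N \<ge> m" unfolding N_def using D by simp
      then have NN0: "N \<ge> N0" using h2 by simp
      have dN: "delta S i dvd N" unfolding N_def using dv by simp
      have "root N c1 * \<rho> = root N (c1 * \<rho> ^ N)"
        using N1 rho0 by (simp add: real_root_mult real_root_power_cancel)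
      also have "\<dots> \<le> root N (M N i i)" using N0 NN0 dN N1 by (intro real_root_le_mono) auto
      also have "\<dots> \<le> f D m" unfolding N_def by (rule f_ge)
      finally show "b < f D m" using h1 unfolding N_def by simp
    qed
  qed
qed

end



context nnset
begin

lemma a_lower:
  assumes D: "D > 0" and dv: "\<forall>i. delta S i dvd D" and n: "n \<ge> 1"
  shows "Lam \<le> root n (a n)"
proof -
  have sm: "strict_mono (\<lambda>m. m*n)" using n by (intro strict_monoI) simp
  have lim: "(f D \<circ> (\<lambda>m. m*n)) \<longlonglongrightarrow> Lam" using f_lim[OF D dv] sm by (rule LIMSEQ_subseq_LIMSEQ)
  show ?thesis
  proof (rule LIMSEQ_le_const2[OF lim], intro exI[of _ 1] allI impI)
    fix m :: nat assume m: "m \<ge> 1"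
    define k where "k = m*D"
    have k1: "k \<ge> 1" unfolding k_def using m D by (simp add: Suc_le_eq)
    obtain i where i: "f D (m*n) = root (m*n*D) (M (m*n*D) i i)" using f_in by blast
    have eq: "m*n*D = n*k" unfolding k_def by (simp add: mult_ac)
    have "root (n*k) (M (n*k) i i) \<le> root (n*k) (a (k*n))"
      using M_le_a[of "n*k" i] n k1 by (intro real_root_le_mono) (auto simp: mult.commute)
    also have "\<dots> \<le> root (n*k) (a n ^ k)"
      using a_pow[OF k1, of n] n k1 by (intro real_root_le_mono) auto
    also have "\<dots> = root n (a n)"
      using k1 a_nonneg by (simp add: real_root_mult_exp real_root_power_cancel)
    finally show "(f D \<circ> (\<lambda>m. m*n)) m \<le> root n (a n)" using i eq by simp
  qed
qed

lemma a_upper: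
  assumes mu: "\<mu> > Lam"
  shows "\<exists>C>0. \<forall>n\<ge>1. a n \<le> C * (2 * real n) ^ CARD('n) * \<mu> ^ n"
proof -
  have mu0: "\<mu> > 0" using mu Lam_nonneg by simp
  define d where "d = real CARD('n)"
  define Bd where "Bd = (1 + d * (cS/\<mu>)) ^ CARD('n)"
  have Bd1: "Bd \<ge> 1" unfolding Bd_def d_def using cS_nonneg mu0 by simp
  have d1: "d \<ge> 1" unfolding d_def by simp
  have hyp: "mprod As $ s $ s \<le> \<mu> ^ length As" if "set As \<subseteq> S" for As s
  proof -
    have "mprod As \<in> prods S (length As)" unfolding prods_def using that by auto
    then have "mprod As $ s $ s \<le> M (length As) s s" by (rule M_ge)
    also have "\<dots> \<le> Lam ^ length As" by (rule M_le_Lam)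
    also have "\<dots> \<le> \<mu> ^ length As" using Lam_nonneg mu by (intro power_mono) auto
    finally show ?thesis .
  qed
  show ?thesis
  proof (intro exI[of _ "d*d*Bd"] conjI allI impI)
    show "d*d*Bd > 0" using d1 Bd1 by simp
    fix n :: nat assume n: "n \<ge> 1"
    obtain P where P: "P \<in> prods S n" "a n = norm P" using a_in by blast
    then obtain As where As: "set As \<subseteq> S" "length As = n" "P = mprod As" unfolding prods_def by auto
    have ent: "P $ i $ j \<le> Bd * (real n + 1) ^ CARD('n) * \<mu> ^ n" for i j
    proof -
      have "P $ i $ j = walk As {} i j" using As by (simp add: walk_empty)
      also have "\<dots> \<le> Bd * (real n + 1) ^ CARD('n) * \<mu> ^ n"
        using walk_bound[OF mu0 hyp, of "{}" "CARD('n)" As i j] As unfolding Bd_def d_def by simp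
      finally show ?thesis .
    qed
    have "norm P \<le> (\<Sum>i\<in>UNIV. \<Sum>j\<in>UNIV. \<bar>P$i$j\<bar>)" by (rule norm_le_entries)
    also have "\<dots> \<le> (\<Sum>i\<in>(UNIV::'n set). \<Sum>j\<in>(UNIV::'n set). Bd * (real n + 1) ^ CARD('n) * \<mu> ^ n)"
      using ent prods_nonneg[OF P(1)] by (intro sum_mono) auto
    also have "\<dots> = d*d*Bd * (real n + 1) ^ CARD('n) * \<mu> ^ n" unfolding d_def by simp
    also have "\<dots> \<le> d*d*Bd * (2 * real n) ^ CARD('n) * \<mu> ^ n"
    proof -
      have "(real n + 1) ^ CARD('n) \<le> (2 * real n) ^ CARD('n)" using n by (intro power_mono) auto
      then show ?thesis using d1 Bd1 mu0 by (intro mult_right_mono mult_left_mono) auto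
    qed
    finally show "a n \<le> d*d*Bd * (2 * real n) ^ CARD('n) * \<mu> ^ n" using P by simp
  qed
qed

lemma g_lim:
  assumes D: "D > 0" and dv: "\<forall>i. delta S i dvd D"
  shows "(\<lambda>n. root n (a n)) \<longlonglongrightarrow> Lam"
proof (rule order_tendstoI)
  fix b assume b: "b < Lam"
  have "\<forall>\<^sub>F n in sequentially. n \<ge> 1" by (rule eventually_ge_at_top)
  then show "\<forall>\<^sub>F n in sequentially. b < root n (a n)"
    by (rule eventually_mono) (use a_lower[OF D dv] b in fastforce)
next
  fix b assume b: "Lam < b"
  define \<mu> where "\<mu> = (Lam + b) / 2"
  have mu: "\<mu> > Lam" "\<mu> < b" unfolding \<mu>_def using b by auto
  have mu0: "\<mu> > 0" using mu Lam_nonneg by simp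
  obtain C where C: "C > 0" "\<forall>n\<ge>1. a n \<le> C * (2 * real n) ^ CARD('n) * \<mu> ^ n"
    using a_upper[OF mu(1)] by blast
  have "(\<lambda>n. root n C * (root n 2 * root n (real n)) ^ CARD('n) * \<mu>) \<longlonglongrightarrow> 1 * (1 * 1) ^ CARD('n) * \<mu>"
    by (intro tendsto_mult tendsto_power tendsto_const LIMSEQ_root_const LIMSEQ_root C) auto
  then have ev1: "\<forall>\<^sub>F n in sequentially. root n C * (root n 2 * root n (real n)) ^ CARD('n) * \<mu> < b"
    using mu by (intro order_tendstoD(2)) auto
  have ev2: "\<forall>\<^sub>F n in sequentially. n \<ge> 1" by (rule eventually_ge_at_top)
  show "\<forall>\<^sub>F n in sequentially. root n (a n) < b" using ev1 ev2
  proof (rule eventually_elim2)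
    fix n :: nat assume h1: "root n C * (root n 2 * root n (real n)) ^ CARD('n) * \<mu> < b" and n: "n \<ge> 1"
    have "root n (a n) \<le> root n (C * (2 * real n) ^ CARD('n) * \<mu> ^ n)"
      using C n by (intro real_root_le_mono) auto
    also have "\<dots> = root n C * (root n 2 * root n (real n)) ^ CARD('n) * \<mu>"
      using n mu0 by (simp add: real_root_mult real_root_power real_root_power_cancel power_mult_distrib)
    finally show "root n (a n) < b" using h1 by simp
  qed
qed

lemma jsr_eq:
  assumes D: "D > 0" and dv: "\<forall>i. delta S i dvd D"
  shows "jsr S = Lam"
proof -
  have "jsr S = lim (\<lambda>n. root n (a n))" unfolding jsr_def a_def ..
  also have "\<dots> = Lam" using g_lim[OF D dv] by (rule limI)
  finally show ?thesis .
qed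

definition tr where "tr D m = Max ((\<lambda>P. root (m*D) (trace P)) ` prods S (m*D))"

lemma tr_lim:
  assumes D: "D > 0" and dv: "\<forall>i. delta S i dvd D"
  shows "tr D \<longlonglongrightarrow> Lam"
proof (rule tendsto_sandwich[of "f D" _ _ "\<lambda>m. root (m*D) (real CARD('n)) * f D m"])
  have ev: "\<forall>\<^sub>F m in sequentially. m \<ge> 1" by (rule eventually_ge_at_top)
  show "\<forall>\<^sub>F m in sequentially. f D m \<le> tr D m" using ev
  proof (rule eventually_mono)
    fix m :: nat assume m: "m \<ge> 1"
    define N where "N = m*D"
    obtain i where i: "f D m = root N (M N i i)" using f_in unfolding N_def by blast
    obtain P where P: "P \<in> prods S N" "P$i$i = M N i i" using M_in by blast
    have "P$i$i \<le> trace P" unfolding trace_def using prods_nonneg[OF P(1)] by (intro member_le_sum) auto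
    then have "root N (M N i i) \<le> root N (trace P)" using P m D unfolding N_def
      by (intro real_root_le_mono) auto
    also have "\<dots> \<le> tr D m" unfolding tr_def N_def using prods_fin P(1) unfolding N_def
      by (intro Max_ge) auto
    finally show "f D m \<le> tr D m" using i by simp
  qed
  show "\<forall>\<^sub>F m in sequentially. tr D m \<le> root (m*D) (real CARD('n)) * f D m" using ev
  proof (rule eventually_mono)
    fix m :: nat assume m: "m \<ge> 1"
    define N where "N = m*D"
    have N0: "N > 0" unfolding N_def using m D by simp
    have "tr D m \<in> (\<lambda>P. root N (trace P)) ` prods S N" unfolding tr_def N_def
      using prods_fin prods_ne by (intro Max_in) auto
    then obtain P where P: "P \<in> prods S N" "tr D m = root N (trace P)" by auto
    have diag: "P$i$i \<le> f D m ^ N" for i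
    proof -
      have "P$i$i \<le> M N i i" using P(1) by (rule M_ge)
      also have "\<dots> = root N (M N i i) ^ N" using N0 M_nonneg by simp
      also have "\<dots> \<le> f D m ^ N" using f_ge[of m D i] N0 M_nonneg unfolding N_def
        by (intro power_mono) (auto simp: real_root_ge_zero)
      finally show ?thesis .
    qed
    have "trace P \<le> (\<Sum>i\<in>(UNIV::'n set). f D m ^ N)" unfolding trace_def using diag by (intro sum_mono) auto
    also have "\<dots> = real CARD('n) * f D m ^ N" by simp
    finally have "root N (trace P) \<le> root N (real CARD('n) * f D m ^ N)" using N0 by (intro real_root_le_mono) auto
    also have "\<dots> = root N (real CARD('n)) * f D m"
      using N0 f_nonneg by (simp add: real_root_mult real_root_power_cancel)
    finally show "tr D m \<le> root (m*D) (real CARD('n)) * f D m" using P N_def by simp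
  qed
  show "f D \<longlonglongrightarrow> Lam" using f_lim[OF D dv] .
  have sm: "strict_mono (\<lambda>m. m*D)" using D by (intro strict_monoI) simp
  have "(\<lambda>N. root N (real CARD('n))) \<longlonglongrightarrow> 1" by (rule LIMSEQ_root_const) simp
  then have "((\<lambda>N. root N (real CARD('n))) \<circ> (\<lambda>m. m*D)) \<longlonglongrightarrow> 1" using sm by (rule LIMSEQ_subseq_LIMSEQ)
  then have "(\<lambda>m. root (m*D) (real CARD('n)) * f D m) \<longlonglongrightarrow> 1 * Lam"
    using f_lim[OF D dv] by (intro tendsto_mult) (simp_all add: comp_def)
  then show "(\<lambda>m. root (m*D) (real CARD('n)) * f D m) \<longlonglongrightarrow> Lam" by simp
qed

end

theorem proposition2:
  fixes \<Sigma> :: "(real^'n^'n) set" and \<Delta> :: nat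
  assumes "finite \<Sigma>" and "\<Sigma> \<noteq> {}"
    and "\<forall>A\<in>\<Sigma>. \<forall>i j. A $ i $ j \<ge> 0"
    and "\<Delta> > 0" and "\<forall>i. delta \<Sigma> i dvd \<Delta>"
  shows "((\<lambda>m. Max ((\<lambda>i. root (m * \<Delta>) (maxentry \<Sigma> (m * \<Delta>) i i)) ` UNIV))
           \<longlonglongrightarrow> jsr \<Sigma>)
       \<and> ((\<lambda>m. Max ((\<lambda>P. root (m * \<Delta>) (trace P)) ` prods \<Sigma> (m * \<Delta>)))
           \<longlonglongrightarrow> jsr \<Sigma>)"
proof -
  interpret nnset \<Sigma> using assms(1-3) by unfold_locales
  have j: "jsr \<Sigma> = Lam" using jsr_eq[OF assms(4,5)] .
  have 1: "f \<Delta> \<longlonglongrightarrow> Lam" using f_lim[OF assms(4,5)] .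
  have 2: "tr \<Delta> \<longlonglongrightarrow> Lam" using tr_lim[OF assms(4,5)] .
  show ?thesis using 1 2 unfolding j f_def tr_def by simp
qed



end
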